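(* Let $X$ be a real Banach space, $K$ a compact Hausdorff space and $T\colon X\to C(K)$ a U-embedding. Let $F_T\colon K\to X^*$ be given by $\langle x,F_T(k)\rangle=(Tx)(k)$, let $A_0:=F_T^{-1}(\mathrm{Ext}\,B_{X^*})$, and let $G:=F_T|_{\overline{A_0}}$. Then the map $T_G\colon X\to C(\overline{A_0})$, $(T_Gx)(k)=\langle x,G(k)\rangle=(Tx)(k)$ for $k\in\overline{A_0}$, is a U-embedding.
   Context: $C(K)$ and $C(\overline{A_0})$ carry the sup norm; $\mathrm{Ext}\,B_{X^*}$ is the set of extreme points of the dual unit ball. A linear isometry $T\colon X\to Y$ is a U-embedding if every $x^*\in X^*$ has a unique $y^*\in Y^*$ with $T^*(y^* )=x^*$ and $\|y^*\|=\|x^*\|$. $A_0$ is called the U-core of $T$. *)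

theory Defs
  imports "HOL-Analysis.Analysis"
begin

text \<open>C(S) for a subset S of a topological space: continuous real functions on S
  (with the subspace topology), normalised to vanish off S.\<close>
definition cfun :: "'k::topological_space set \<Rightarrow> ('k \<Rightarrow> real) set" where
  "cfun S = {f. continuous_on S f \<and> (\<forall>k. k \<notin> S \<longrightarrow> f k = 0)}"

definition supn :: "'k set \<Rightarrow> ('k \<Rightarrow> real) \<Rightarrow> real" where
  "supn S f = (if S = {} then 0 else Sup ((\<lambda>k. \<bar>f k\<bar>) ` S))"

text \<open>Dual space C(S)^*: bounded linear functionals on C(S), normalised to vanish
  outside C(S) (so that equality of functionals is equality on C(S)).\<close>
definition cdual :: "'k::topological_space set \<Rightarrow> (('k \<Rightarrow> real) \<Rightarrow> real) set" where
  "cdual S = {phi.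
     (\<forall>f\<in>cfun S. \<forall>g\<in>cfun S. phi (\<lambda>k. f k + g k) = phi f + phi g) \<and>
     (\<forall>f\<in>cfun S. \<forall>c. phi (\<lambda>k. c * f k) = c * phi f) \<and>
     (\<exists>B. \<forall>f\<in>cfun S. \<bar>phi f\<bar> \<le> B * supn S f) \<and>
     (\<forall>f. f \<notin> cfun S \<longrightarrow> phi f = 0)}"

definition dnorm :: "'k::topological_space set \<Rightarrow> (('k \<Rightarrow> real) \<Rightarrow> real) \<Rightarrow> real" where
  "dnorm S phi = Sup {\<bar>phi f\<bar> | f. f \<in> cfun S \<and> supn S f \<le> 1}"

definition U_embedding :: "'k::topological_space set \<Rightarrow> ('a::real_normed_vector \<Rightarrow> 'k \<Rightarrow> real) \<Rightarrow> bool" where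
  "U_embedding S T \<longleftrightarrow>
     (\<forall>x. T x \<in> cfun S) \<and>
     (\<forall>x y k. T (x + y) k = T x k + T y k) \<and>
     (\<forall>c x k. T (c *\<^sub>R x) k = c * T x k) \<and>
     (\<forall>x. supn S (T x) = norm x) \<and>
     (\<forall>xs :: 'a \<Rightarrow>\<^sub>L real. \<exists>!phi. phi \<in> cdual S \<and> (\<forall>x. phi (T x) = blinfun_apply xs x) \<and> dnorm S phi = norm xs)"

end

theory Submission
  imports Defs
begin


lemma normal_K:
  assumes "compact (UNIV :: 'k::t2_space set)"
  shows "normal_space (euclidean :: 'k topology)"
proof (rule compact_Hausdorff_or_regular_imp_normal_space)
  show "compact_space (euclidean :: 'k topology)"
    using assms by (simp add: compact_space_def compactin_euclidean_iff)
  show "Hausdorff_space (euclidean :: 'k topology) \<or> regular_space (euclidean :: 'k topology)"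
  proof -
    have "Hausdorff_space (euclidean::'k topology)" unfolding Hausdorff_space_def
    proof (intro allI impI)
      fix x y :: 'k assume "x \<in> topspace euclidean \<and> y \<in> topspace euclidean \<and> x \<noteq> y"
      then obtain U V where "open U" "open V" "x \<in> U" "y \<in> V" "U \<inter> V = {}"
        using hausdorff[of x y] by blast
      then show "\<exists>U V. openin euclidean U \<and> openin euclidean V \<and> x \<in> U \<and> y \<in> V \<and> disjnt U V"
        by (auto simp: disjnt_def)
    qed
    then show ?thesis ..
  qed
qed

lemma urysohn_K:
  fixes A B :: "'k::t2_space set"
  assumes "compact (UNIV :: 'k set)" "closed A" "closed B" "A \<inter> B = {}"
  obtains f :: "'k \<Rightarrow> real" where "continuous_on UNIV f" "\<And>t. 0 \<le> f t \<and> f t \<le> 1"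
    "\<And>t. t \<in> A \<Longrightarrow> f t = 1" "\<And>t. t \<in> B \<Longrightarrow> f t = 0"
proof -
  have N: "normal_space (euclidean :: 'k topology)" by (rule normal_K[OF assms(1)])
  have cA: "closedin euclidean A" and cB: "closedin euclidean B"
    using assms(2,3) by simp_all
  have d: "disjnt B A" using assms(4) by (auto simp: disjnt_def)
  obtain f where f: "continuous_map euclidean (top_of_set {0..1::real}) f" "f ` B \<subseteq> {0}" "f ` A \<subseteq> {1}"
    using Urysohn_lemma[OF N cB cA d, of 0 1] by auto
  have f2: "continuous_map euclidean euclideanreal f" "f \<in> topspace euclidean \<rightarrow> {0..1}"
    using f(1) unfolding continuous_map_in_subtopology by auto
  have "continuous_on UNIV f" using f2(1) by simp
  moreover have "\<And>t. 0 \<le> f t \<and> f t \<le> 1" using f2(2) by auto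
  moreover have "\<And>t. t \<in> A \<Longrightarrow> f t = 1" "\<And>t. t \<in> B \<Longrightarrow> f t = 0" using f(2,3) by auto
  ultimately show ?thesis using that by blast
qed

lemma tietze_K:
  fixes S :: "'k::t2_space set"
  assumes "compact (UNIV :: 'k set)" "closed S" "continuous_on S f"
    "\<And>t. t \<in> S \<Longrightarrow> a \<le> f t \<and> f t \<le> b" "a \<le> (b::real)"
  obtains g where "continuous_on UNIV g" "\<And>t. t \<in> S \<Longrightarrow> g t = f t" "\<And>t. a \<le> g t \<and> g t \<le> b"
proof -
  have N: "normal_space (euclidean :: 'k topology)" by (rule normal_K[OF assms(1)])
  have cS: "closedin euclidean S" using assms(2) by simp
  have cf: "continuous_map (subtopology euclidean S) euclideanreal f" using assms(3) by simp
  have fim: "f ` S \<subseteq> {a..b}" using assms(4) by auto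
  obtain g where g: "continuous_map euclidean euclideanreal g" "\<And>x. x \<in> S \<Longrightarrow> g x = f x"
     "g ` topspace euclidean \<subseteq> {a..b}"
    using Tietze_extension_closed_real_interval[OF N cS cf fim assms(5)] by blast
  have "continuous_on UNIV g" using g(1) by simp
  moreover have "\<And>t. a \<le> g t \<and> g t \<le> b" using g(3) unfolding image_subset_iff by auto
  ultimately show ?thesis using that g(2) by blast
qed

lemma cfunD: "f \<in> cfun S \<Longrightarrow> continuous_on S f" "f \<in> cfun S \<Longrightarrow> k \<notin> S \<Longrightarrow> f k = 0"
  by (auto simp: cfun_def)

lemma cfun_UNIV: "cfun UNIV = {f. continuous_on UNIV f}"
  by (auto simp: cfun_def)

lemma cfun_add: "f \<in> cfun S \<Longrightarrow> g \<in> cfun S \<Longrightarrow> (\<lambda>t. f t + g t) \<in> cfun S"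
  by (auto simp: cfun_def intro!: continuous_intros)

lemma cfun_scale: "f \<in> cfun S \<Longrightarrow> (\<lambda>t. c * f t) \<in> cfun S"
  by (auto simp: cfun_def intro!: continuous_intros)

lemma cfun_diff: "f \<in> cfun S \<Longrightarrow> g \<in> cfun S \<Longrightarrow> (\<lambda>t. f t - g t) \<in> cfun S"
  by (auto simp: cfun_def intro!: continuous_intros)

lemma cfun_zero: "(\<lambda>t. 0) \<in> cfun S"
  by (auto simp: cfun_def)

lemma bdd_abs_img:
  fixes f :: "'k::topological_space \<Rightarrow> real"
  assumes "compact S" "continuous_on S f"
  shows "bdd_above ((\<lambda>k. \<bar>f k\<bar>) ` S)"
proof -
  have "continuous_on S (\<lambda>k. \<bar>f k\<bar>)" using assms(2) by (rule continuous_on_rabs)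
  then have "compact ((\<lambda>k. \<bar>f k\<bar>) ` S)"
    using assms(1) by (intro compact_continuous_image)
  then show ?thesis by (intro bounded_imp_bdd_above compact_imp_bounded)
qed

lemma abs_le_supn: "compact S \<Longrightarrow> continuous_on S f \<Longrightarrow> t \<in> S \<Longrightarrow> \<bar>f t\<bar> \<le> supn S f"
  unfolding supn_def by (auto intro!: cSup_upper bdd_abs_img)

lemma supn_nonneg: "compact S \<Longrightarrow> continuous_on S f \<Longrightarrow> 0 \<le> supn S f"
proof (cases "S = {}")
  case True then show ?thesis by (simp add: supn_def)
next
  case False
  assume a: "compact S" "continuous_on S f"
  then obtain t where "t \<in> S" using False by blast
  then show ?thesis using abs_le_supn[OF a \<open>t \<in> S\<close>] by linarith
qed

lemma supn_le: "0 \<le> B \<Longrightarrow> (\<And>t. t \<in> S \<Longrightarrow> \<bar>f t\<bar> \<le> B) \<Longrightarrow> supn S f \<le> B"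
  unfolding supn_def by (auto intro!: cSup_least)

lemma supn_attained:
  assumes "compact S" "S \<noteq> {}" "continuous_on S f"
  shows "\<exists>t\<in>S. \<bar>f t\<bar> = supn S f"
proof -
  have "continuous_on S (\<lambda>k. \<bar>f k\<bar>)" using assms(3) by (rule continuous_on_rabs)
  then have c: "compact ((\<lambda>k. \<bar>f k\<bar>) ` S)"
    using assms(1) by (intro compact_continuous_image)
  obtain y where y: "y \<in> (\<lambda>k. \<bar>f k\<bar>) ` S" "\<forall>z\<in>(\<lambda>k. \<bar>f k\<bar>) ` S. z \<le> y"
    using compact_attains_sup[OF c] assms(2) by blast
  have "Sup ((\<lambda>k. \<bar>f k\<bar>) ` S) = y"
    using y by (intro cSup_eq_maximum) auto
  then show ?thesis using y assms(2) by (auto simp: supn_def)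
qed

lemma supn_zero: "compact S \<Longrightarrow> continuous_on S f \<Longrightarrow> supn S f = 0 \<Longrightarrow> t \<in> S \<Longrightarrow> f t = 0"
  using abs_le_supn by fastforce

lemma cd_add: "phi \<in> cdual S \<Longrightarrow> f \<in> cfun S \<Longrightarrow> g \<in> cfun S \<Longrightarrow> phi (\<lambda>t. f t + g t) = phi f + phi g"
  by (auto simp: cdual_def)

lemma cd_scale: "phi \<in> cdual S \<Longrightarrow> f \<in> cfun S \<Longrightarrow> phi (\<lambda>t. c * f t) = c * phi f"
  by (auto simp: cdual_def)

lemma cd_out: "phi \<in> cdual S \<Longrightarrow> f \<notin> cfun S \<Longrightarrow> phi f = 0"
  by (auto simp: cdual_def)

lemma cd_zero: "phi \<in> cdual S \<Longrightarrow> phi (\<lambda>t. 0) = 0"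
proof -
  assume a: "phi \<in> cdual S"
  have "phi (\<lambda>t. 0 * (\<lambda>t. 0::real) t) = 0 * phi (\<lambda>t. 0)"
    by (rule cd_scale[OF a cfun_zero])
  then show ?thesis by simp
qed

lemma cd_diff: "phi \<in> cdual S \<Longrightarrow> f \<in> cfun S \<Longrightarrow> g \<in> cfun S \<Longrightarrow> phi (\<lambda>t. f t - g t) = phi f - phi g"
proof -
  assume a: "phi \<in> cdual S" "f \<in> cfun S" "g \<in> cfun S"
  have e1: "phi (\<lambda>t. f t + (\<lambda>t. (-1) * g t) t) = phi f + phi (\<lambda>t. (-1) * g t)"
    by (rule cd_add[OF a(1,2) cfun_scale[OF a(3)]])
  have e2: "phi (\<lambda>t. (-1) * g t) = (-1) * phi g" by (rule cd_scale[OF a(1,3)])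
  have e3: "(\<lambda>t. f t - g t) = (\<lambda>t. f t + (\<lambda>t. (-1) * g t) t)" by simp
  show ?thesis unfolding e3 e1 e2 by simp
qed

lemma cd_cong: "phi \<in> cdual S \<Longrightarrow> f \<in> cfun S \<Longrightarrow> g \<in> cfun S \<Longrightarrow> (\<And>t. t \<in> S \<Longrightarrow> f t = g t) \<Longrightarrow> phi f = phi g"
proof -
  assume a: "phi \<in> cdual S" "f \<in> cfun S" "g \<in> cfun S" "\<And>t. t \<in> S \<Longrightarrow> f t = g t"
  have "f = g"
  proof
    fix t show "f t = g t" using a cfunD(2)[OF a(2)] cfunD(2)[OF a(3)] by (cases "t \<in> S") auto
  qed
  then show ?thesis by simp
qed

lemma cd_bdd:
  assumes "phi \<in> cdual S" "compact S"
  shows "bdd_above {\<bar>phi f\<bar> | f. f \<in> cfun S \<and> supn S f \<le> 1}"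
proof -
  obtain B where B: "\<forall>f\<in>cfun S. \<bar>phi f\<bar> \<le> B * supn S f" using assms(1) by (auto simp: cdual_def)
  show ?thesis
  proof (rule bdd_aboveI)
    fix y assume "y \<in> {\<bar>phi f\<bar> | f. f \<in> cfun S \<and> supn S f \<le> 1}"
    then obtain f where f: "f \<in> cfun S" "supn S f \<le> 1" "y = \<bar>phi f\<bar>" by auto
    have "0 \<le> supn S f" using supn_nonneg[OF assms(2) cfunD(1)[OF f(1)]] .
    then have "B * supn S f \<le> \<bar>B\<bar> * supn S f" by (intro mult_right_mono) auto
    also have "\<dots> \<le> \<bar>B\<bar> * 1" using f(2) by (intro mult_left_mono) auto
    finally have "B * supn S f \<le> \<bar>B\<bar>" by simp
    then show "y \<le> \<bar>B\<bar>" using B f by force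
  qed
qed

lemma dnorm_nonneg:
  assumes "phi \<in> cdual S" "compact S"
  shows "0 \<le> dnorm S phi"
proof -
  have "\<bar>phi (\<lambda>t. 0)\<bar> \<le> dnorm S phi"
    unfolding dnorm_def
    by (rule cSup_upper[OF _ cd_bdd[OF assms]]) (auto intro!: cfun_zero supn_le)
  then show ?thesis by simp
qed

lemma cd_bound:
  assumes "phi \<in> cdual S" "compact S" "f \<in> cfun S"
  shows "\<bar>phi f\<bar> \<le> dnorm S phi * supn S f"
proof (cases "supn S f = 0")
  case True
  have "\<And>t. t \<in> S \<Longrightarrow> f t = (\<lambda>t. 0) t"
    using supn_zero[OF assms(2) cfunD(1)[OF assms(3)] True] by simp
  then have "phi f = phi (\<lambda>t. 0)" by (intro cd_cong[OF assms(1) assms(3) cfun_zero])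
  then show ?thesis using cd_zero[OF assms(1)] True by simp
next
  case False
  define M where "M = supn S f"
  have M: "0 < M" using False supn_nonneg[OF assms(2) cfunD(1)[OF assms(3)]] M_def by simp
  define g where "g = (\<lambda>t. (1/M) * f t)"
  have g: "g \<in> cfun S" unfolding g_def by (intro cfun_scale assms)
  have "supn S g \<le> 1"
  proof (rule supn_le)
    fix t assume "t \<in> S"
    then have "\<bar>f t\<bar> \<le> M" using abs_le_supn[OF assms(2) cfunD(1)[OF assms(3)]] M_def by simp
    then show "\<bar>g t\<bar> \<le> 1" using M by (simp add: g_def abs_mult)
  qed simp
  then have "\<bar>phi g\<bar> \<le> dnorm S phi"
    unfolding dnorm_def using g by (intro cSup_upper[OF _ cd_bdd[OF assms(1,2)]]) auto
  moreover have "phi g = (1/M) * phi f" unfolding g_def by (rule cd_scale[OF assms(1,3)])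
  ultimately have "\<bar>(1/M) * phi f\<bar> \<le> dnorm S phi" by simp
  then have "(1/M) * \<bar>phi f\<bar> \<le> dnorm S phi" using M by (simp add: abs_mult)
  then have "M * ((1/M) * \<bar>phi f\<bar>) \<le> M * dnorm S phi" using M by (intro mult_left_mono) auto
  then have "\<bar>phi f\<bar> \<le> M * dnorm S phi" using M by simp
  then show ?thesis unfolding M_def by (metis mult.commute)
qed

lemma dnorm_le:
  assumes "compact S" "0 \<le> B" "\<And>f. f \<in> cfun S \<Longrightarrow> \<bar>phi f\<bar> \<le> B * supn S f"
  shows "dnorm S phi \<le> B"
  unfolding dnorm_def
proof (rule cSup_least)
  show "{\<bar>phi f\<bar> |f. f \<in> cfun S \<and> supn S f \<le> 1} \<noteq> {}"
    using cfun_zero[of S] supn_le[of 1 S "\<lambda>t. 0"] by auto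
next
  fix y assume "y \<in> {\<bar>phi f\<bar> |f. f \<in> cfun S \<and> supn S f \<le> 1}"
  then obtain f where f: "f \<in> cfun S" "supn S f \<le> 1" "y = \<bar>phi f\<bar>" by auto
  have "B * supn S f \<le> B * 1" using f(2) assms(2) by (intro mult_left_mono) auto
  then show "y \<le> B" using assms(3)[OF f(1)] f(3) by simp
qed

lemma blinfun_near:
  fixes xs :: "'a::real_normed_vector \<Rightarrow>\<^sub>L real"
  assumes "0 < d"
  shows "\<exists>x. norm x \<le> 1 \<and> blinfun_apply xs x > norm xs - d"
proof (rule ccontr)
  assume "\<not> ?thesis"
  then have H: "\<And>x. norm x \<le> 1 \<Longrightarrow> blinfun_apply xs x \<le> norm xs - d" by force
  have H0: "0 \<le> norm xs - d" using H[of 0] by simp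
  have "norm xs \<le> norm xs - d"
  proof (rule norm_blinfun_bound[OF H0])
    fix x :: 'a
    show "norm (blinfun_apply xs x) \<le> (norm xs - d) * norm x"
    proof (cases "x = 0")
      case True then show ?thesis by simp
    next
      case False
      define y where "y = (1 / norm x) *\<^sub>R x"
      have ny: "norm y \<le> 1" "norm (-y) \<le> 1" using False by (auto simp: y_def)
      have e: "blinfun_apply xs y = blinfun_apply xs x / norm x"
        by (simp add: y_def blinfun.scaleR_right)
      have e2: "blinfun_apply xs (-y) = - (blinfun_apply xs x / norm x)"
        by (simp add: y_def blinfun.scaleR_right blinfun.minus_right)
      have "\<bar>blinfun_apply xs x / norm x\<bar> \<le> norm xs - d"
        using H[OF ny(1)] H[OF ny(2)] e e2 by linarith
      then show ?thesis using False by (simp add: divide_le_eq mult.commute)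
    qed
  qed
  then show False using assms by simp
qed

lemma dnorm_lower:
  fixes xs :: "'a::real_normed_vector \<Rightarrow>\<^sub>L real"
  assumes "phi \<in> cdual S" "compact S" "\<And>x. TT x \<in> cfun S" "\<And>x. supn S (TT x) = norm x"
    "\<And>x. phi (TT x) = blinfun_apply xs x"
  shows "norm xs \<le> dnorm S phi"
proof (rule norm_blinfun_bound)
  show "0 \<le> dnorm S phi" by (rule dnorm_nonneg[OF assms(1,2)])
  fix x show "norm (blinfun_apply xs x) \<le> dnorm S phi * norm x"
    using cd_bound[OF assms(1,2,3)] assms(4,5) by (metis real_norm_def)
qed


locale uemb =
  fixes T :: "'a::banach \<Rightarrow> 'k::t2_space \<Rightarrow> real"
  assumes cK: "compact (UNIV :: 'k set)"
    and U: "U_embedding (UNIV :: 'k set) T"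
begin

lemma T_cfun: "T x \<in> cfun UNIV" using U by (simp add: U_embedding_def)
lemma T_cont: "continuous_on UNIV (T x)" using T_cfun cfunD(1) by blast
lemma T_add: "T (x + y) k = T x k + T y k" using U by (simp add: U_embedding_def)
lemma T_scale: "T (c *\<^sub>R x) k = c * T x k" using U by (simp add: U_embedding_def)
lemma T_norm: "supn UNIV (T x) = norm x" using U by (simp add: U_embedding_def)
lemma T_ext: "\<exists>!phi. phi \<in> cdual UNIV \<and> (\<forall>x. phi (T x) = blinfun_apply xs x) \<and> dnorm UNIV phi = norm xs"
  using U by (simp add: U_embedding_def)
lemma T_zero: "T 0 k = 0" using T_scale[of 0 0 k] by simp
lemma T_minus: "T (- x) k = - T x k" using T_scale[of "-1" x k] by simp
lemma T_bound: "\<bar>T x k\<bar> \<le> norm x"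
  using abs_le_supn[OF cK T_cont, of k x] T_norm by simp

lemma T_linear: "bounded_linear (\<lambda>x. T x k)"
proof (rule bounded_linear_intro[where K=1])
  show "\<And>x y. T (x + y) k = T x k + T y k" by (rule T_add)
  show "\<And>r x. T (r *\<^sub>R x) k = r *\<^sub>R T x k" by (simp add: T_scale)
  show "\<And>x. norm (T x k) \<le> norm x * 1" using T_bound by simp
qed

definition FT :: "'k \<Rightarrow> 'a \<Rightarrow>\<^sub>L real" where "FT k = Blinfun (\<lambda>x. T x k)"

lemma FT_apply[simp]: "blinfun_apply (FT k) x = T x k"
  unfolding FT_def using T_linear by (simp add: bounded_linear_Blinfun_apply)

lemma FT_norm_le: "norm (FT k) \<le> 1"
  by (rule norm_blinfun_bound) (use T_bound in auto)

lemma FT_norm_nonneg: "0 \<le> norm (FT k)" by simp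

lemma abs_T_le_FT: "\<bar>T x k\<bar> \<le> norm (FT k) * norm x"
  using norm_blinfun[of "FT k" x] by simp

lemma closed_FT_le: "closed {k. norm (FT k) \<le> c}"
proof (cases "0 \<le> c")
  case True
  have "{k. norm (FT k) \<le> c} = (\<Inter>x. {k. \<bar>T x k\<bar> \<le> c * norm x})"
  proof (intro set_eqI iffI)
    fix k assume "k \<in> {k. norm (FT k) \<le> c}"
    then have "norm (FT k) * norm x \<le> c * norm x" for x by (intro mult_right_mono) auto
    then show "k \<in> (\<Inter>x. {k. \<bar>T x k\<bar> \<le> c * norm x})"
      using abs_T_le_FT order_trans by blast
  next
    fix k assume "k \<in> (\<Inter>x. {k. \<bar>T x k\<bar> \<le> c * norm x})"
    then show "k \<in> {k. norm (FT k) \<le> c}"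
      using True by (auto intro!: norm_blinfun_bound)
  qed
  moreover have "closed {k. \<bar>T x k\<bar> \<le> c * norm x}" for x
    by (intro closed_Collect_le continuous_intros T_cont)
  ultimately show ?thesis by auto
next
  case False
  have "norm (FT k) > c" for k using False FT_norm_nonneg[of k] by linarith
  then have "{k. norm (FT k) \<le> c} = {}" by (auto simp: not_le[symmetric])
  then show ?thesis by simp
qed

definition delta :: "'k \<Rightarrow> ('k \<Rightarrow> real) \<Rightarrow> real" where
  "delta k f = (if f \<in> cfun UNIV then f k else 0)"

lemma one_cfun: "(\<lambda>t. c) \<in> cfun UNIV" by (simp add: cfun_UNIV)

lemma supn_one: "supn UNIV (\<lambda>t::'k. 1) = 1"
proof (rule antisym)
  show "supn UNIV (\<lambda>t::'k. 1) \<le> 1" by (rule supn_le) auto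
  show "1 \<le> supn UNIV (\<lambda>t::'k. 1)" using abs_le_supn[OF cK, of "\<lambda>t. 1" undefined] by simp
qed

lemma delta_bd: "f \<in> cfun UNIV \<Longrightarrow> \<bar>delta k f\<bar> \<le> 1 * supn UNIV f"
  using abs_le_supn[OF cK cfunD(1)] by (simp add: delta_def)

lemma delta_cdual: "delta k \<in> cdual UNIV"
proof -
  have "\<exists>B. \<forall>f\<in>cfun UNIV. \<bar>delta k f\<bar> \<le> B * supn UNIV f" using delta_bd by blast
  then show ?thesis unfolding cdual_def by (auto simp: delta_def cfun_add cfun_scale)
qed

lemma delta_dnorm: "dnorm UNIV (delta k) \<le> 1"
  by (rule dnorm_le[OF cK]) (use delta_bd in auto)

lemma pos_lemma:
  fixes p :: "('k \<Rightarrow> real) \<Rightarrow> real"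
  assumes p: "p \<in> cdual UNIV" "dnorm UNIV p \<le> 1" "p (\<lambda>t. 1) = 1"
    and g: "g \<in> cfun UNIV" "\<And>t. 0 \<le> g t"
  shows "0 \<le> p g"
proof -
  define M where "M = supn UNIV g"
  have gc: "continuous_on UNIV g" using g(1) by (simp add: cfun_UNIV)
  have M0: "0 \<le> M" unfolding M_def by (rule supn_nonneg[OF cK gc])
  have gM: "g t \<le> M" for t using abs_le_supn[OF cK gc, of t] g(2)[of t] M_def by simp
  show ?thesis
  proof (cases "M = 0")
    case True
    then have "g = (\<lambda>t. 0)" using gM g(2) by (intro ext) (metis order_antisym)
    then show ?thesis using cd_zero[OF p(1)] by simp
  next
    case False
    then have Mp: "0 < M" using M0 by simp
    define h where "h = (\<lambda>t. 1 - (2/M) * g t)"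
    have hc: "h \<in> cfun UNIV" unfolding h_def by (intro cfun_diff one_cfun cfun_scale g(1))
    have "\<bar>h t\<bar> \<le> 1" for t
    proof -
      have "(2/M) * g t \<le> (2/M) * M" using gM[of t] Mp by (intro mult_left_mono) auto
      then have "(2/M) * g t \<le> 2" using Mp by simp
      moreover have "0 \<le> (2/M) * g t" using Mp g(2)[of t] by simp
      ultimately show ?thesis unfolding h_def by linarith
    qed
    then have "supn UNIV h \<le> 1" by (intro supn_le) auto
    then have ph: "\<bar>p h\<bar> \<le> 1"
      using cd_bound[OF p(1) cK hc] p(2) dnorm_nonneg[OF p(1) cK] supn_nonneg[OF cK, of h] hc
      by (smt (verit, best) cfun_UNIV mem_Collect_eq mult_left_le mult_right_le_one_le)
    have e1: "p (\<lambda>t. (\<lambda>t. 1) t - (\<lambda>t. (2/M) * g t) t) = p (\<lambda>t. 1) - p (\<lambda>t. (2/M) * g t)"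
      by (rule cd_diff[OF p(1) one_cfun cfun_scale[OF g(1)]])
    have e2: "p (\<lambda>t. (2/M) * g t) = (2/M) * p g" by (rule cd_scale[OF p(1) g(1)])
    moreover have "p h = p (\<lambda>t. 1) - (2/M) * p g"
      using e1 e2 unfolding h_def by simp
    ultimately have "0 \<le> (2/M) * p g" using p(3) ph by simp
    then show ?thesis using Mp by (simp add: zero_le_divide_iff zero_le_mult_iff)
  qed
qed

lemma extreme_helper:
  fixes pa pb :: "('k \<Rightarrow> real) \<Rightarrow> real"
  assumes pa: "pa \<in> cdual UNIV" "dnorm UNIV pa \<le> 1"
    and pb: "pb \<in> cdual UNIV" "dnorm UNIV pb \<le> 1"
    and u: "0 < u" "u < 1"
    and comb: "\<And>f. f \<in> cfun UNIV \<Longrightarrow> (1-u) * pa f + u * pb f = f k"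
    and f: "f \<in> cfun UNIV"
  shows "pa f = f k"
proof -
  have b1: "\<bar>p (\<lambda>t. 1)\<bar> \<le> 1" if "p \<in> cdual UNIV" "dnorm UNIV p \<le> 1" for p :: "('k \<Rightarrow> real) \<Rightarrow> real"
  proof -
    have "\<bar>p (\<lambda>t. 1)\<bar> \<le> dnorm UNIV p * supn UNIV (\<lambda>t::'k. 1)"
      by (rule cd_bound[OF that(1) cK one_cfun])
    then show ?thesis using supn_one that(2) by simp
  qed
  have c1: "(1-u) * pa (\<lambda>t. 1) + u * pb (\<lambda>t. 1) = 1" using comb[OF one_cfun] by simp
  have a1: "pa (\<lambda>t. 1) = 1" and bb1: "pb (\<lambda>t. 1) = 1"
  proof -
    have x: "pa (\<lambda>t. 1) \<le> 1" "pb (\<lambda>t. 1) \<le> 1" using b1[OF pa] b1[OF pb] by auto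
    have "(1-u) * pa (\<lambda>t. 1) \<le> (1-u)" using x(1) u by (simp add: mult_left_le)
    moreover have "u * pb (\<lambda>t. 1) \<le> u" using x(2) u by (simp add: mult_left_le)
    ultimately have "(1-u) * pa (\<lambda>t. 1) = (1-u)" "u * pb (\<lambda>t. 1) = u" using c1 by linarith+
    then show "pa (\<lambda>t. 1) = 1" "pb (\<lambda>t. 1) = 1" using u by auto
  qed
  have van: "pa g = 0" if g: "g \<in> cfun UNIV" "\<And>t. 0 \<le> g t" "g k = 0" for g
  proof -
    have "0 \<le> pa g" by (rule pos_lemma[OF pa a1 g(1,2)])
    moreover have "0 \<le> pb g" by (rule pos_lemma[OF pb bb1 g(1,2)])
    moreover have "(1-u) * pa g + u * pb g = 0" using comb[OF g(1)] g(3) by simp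
    ultimately have "(1-u) * pa g = 0" using u
      by (smt (verit, best) mult_nonneg_nonneg)
    then show ?thesis using u by simp
  qed
  define P where "P = (\<lambda>t. max (f t - f k) 0)"
  define Q where "Q = (\<lambda>t. max (f k - f t) 0)"
  have fc: "continuous_on UNIV f" using f by (simp add: cfun_UNIV)
  have Pc: "P \<in> cfun UNIV" unfolding P_def cfun_UNIV using fc by (auto intro!: continuous_intros)
  have Qc: "Q \<in> cfun UNIV" unfolding Q_def cfun_UNIV using fc by (auto intro!: continuous_intros)
  have "pa P = 0" by (rule van[OF Pc]) (auto simp: P_def)
  moreover have "pa Q = 0" by (rule van[OF Qc]) (auto simp: Q_def)
  moreover have "f = (\<lambda>t. (\<lambda>t. f k * (\<lambda>t. 1) t + P t) t - Q t)"
    by (auto simp: P_def Q_def)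
  moreover have "pa (\<lambda>t. (\<lambda>t. f k * (\<lambda>t. 1) t + P t) t - Q t) = f k * pa (\<lambda>t. 1) + pa P - pa Q"
  proof -
    have e1: "pa (\<lambda>t. (\<lambda>t. f k * (\<lambda>t. 1) t + P t) t - Q t) = pa (\<lambda>t. f k * (\<lambda>t. 1) t + P t) - pa Q"
      by (rule cd_diff[OF pa(1) cfun_add[OF cfun_scale[OF one_cfun] Pc] Qc])
    have e2: "pa (\<lambda>t. (\<lambda>t. f k * (\<lambda>t. 1) t) t + P t) = pa (\<lambda>t. f k * (\<lambda>t. 1) t) + pa P"
      by (rule cd_add[OF pa(1) cfun_scale[OF one_cfun] Pc])
    have e3: "pa (\<lambda>t. f k * (\<lambda>t. 1) t) = f k * pa (\<lambda>t. 1)" by (rule cd_scale[OF pa(1) one_cfun])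
    show ?thesis using e1 e2 e3 by simp
  qed
  ultimately show ?thesis using a1 by simp
qed


lemma stepA:
  assumes n1: "norm (FT k) = 1"
  shows "FT k extreme_point_of cball 0 1"
  unfolding extreme_point_of_def
proof (intro conjI ballI)
  show "FT k \<in> cball 0 1" using n1 by simp
  fix a b :: "'a \<Rightarrow>\<^sub>L real"
  assume a: "a \<in> cball 0 1" and b: "b \<in> cball 0 1"
  show "FT k \<notin> open_segment a b"
  proof
    assume "FT k \<in> open_segment a b"
    then obtain u where ab: "a \<noteq> b" and u: "0 < u" "u < 1" and eq: "FT k = (1-u) *\<^sub>R a + u *\<^sub>R b"
      by (auto simp: in_segment)
    obtain pa where pa: "pa \<in> cdual UNIV" "\<forall>x. pa (T x) = blinfun_apply a x" "dnorm UNIV pa = norm a"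
      using T_ext[of a] by blast
    obtain pb where pb: "pb \<in> cdual UNIV" "\<forall>x. pb (T x) = blinfun_apply b x" "dnorm UNIV pb = norm b"
      using T_ext[of b] by blast
    have na: "dnorm UNIV pa \<le> 1" using a pa(3) by simp
    have nb: "dnorm UNIV pb \<le> 1" using b pb(3) by simp
    have da: "0 \<le> dnorm UNIV pa" by (rule dnorm_nonneg[OF pa(1) cK])
    have db: "0 \<le> dnorm UNIV pb" by (rule dnorm_nonneg[OF pb(1) cK])
    define phi where "phi = (\<lambda>f. (1-u) * pa f + u * pb f)"
    define B where "B = (1-u) * dnorm UNIV pa + u * dnorm UNIV pb"
    have B0: "0 \<le> B" unfolding B_def using u da db by simp
    have B1: "B \<le> 1"
    proof -
      have "(1-u) * dnorm UNIV pa \<le> (1-u) * 1" using na u by (intro mult_left_mono) auto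
      moreover have "u * dnorm UNIV pb \<le> u * 1" using nb u by (intro mult_left_mono) auto
      ultimately show ?thesis unfolding B_def by simp
    qed
    have bd: "\<bar>phi f\<bar> \<le> B * supn UNIV f" if f: "f \<in> cfun UNIV" for f
    proof -
      have "\<bar>phi f\<bar> \<le> \<bar>(1-u) * pa f\<bar> + \<bar>u * pb f\<bar>" unfolding phi_def by (rule abs_triangle_ineq)
      also have "\<dots> = (1-u) * \<bar>pa f\<bar> + u * \<bar>pb f\<bar>" using u by (simp add: abs_mult)
      also have "\<dots> \<le> (1-u) * (dnorm UNIV pa * supn UNIV f) + u * (dnorm UNIV pb * supn UNIV f)"
        using cd_bound[OF pa(1) cK f] cd_bound[OF pb(1) cK f] u
        by (intro add_mono mult_left_mono) auto
      also have "\<dots> = B * supn UNIV f" unfolding B_def by (simp add: algebra_simps)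
      finally show ?thesis .
    qed
    have phi_c: "phi \<in> cdual UNIV"
      unfolding cdual_def
    proof (intro CollectI conjI ballI allI impI)
      fix f g :: "'k \<Rightarrow> real" assume f: "f \<in> cfun UNIV" and g: "g \<in> cfun UNIV"
      show "phi (\<lambda>k. f k + g k) = phi f + phi g"
        unfolding phi_def using cd_add[OF pa(1) f g] cd_add[OF pb(1) f g] by (simp add: algebra_simps)
    next
      fix f :: "'k \<Rightarrow> real" and c :: real assume f: "f \<in> cfun UNIV"
      show "phi (\<lambda>k. c * f k) = c * phi f"
        unfolding phi_def using cd_scale[OF pa(1) f] cd_scale[OF pb(1) f] by (simp add: algebra_simps)
    next
      show "\<exists>B. \<forall>f\<in>cfun UNIV. \<bar>phi f\<bar> \<le> B * supn UNIV f" using bd by blast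
    next
      fix f :: "'k \<Rightarrow> real" assume "f \<notin> cfun UNIV"
      then show "phi f = 0" unfolding phi_def using cd_out[OF pa(1)] cd_out[OF pb(1)] by simp
    qed
    have phiT: "\<forall>x. phi (T x) = blinfun_apply (FT k) x"
    proof
      fix x
      have "blinfun_apply (FT k) x = (1-u) * blinfun_apply a x + u * blinfun_apply b x"
        by (simp add: eq blinfun.add_left blinfun.scaleR_left)
      then show "phi (T x) = blinfun_apply (FT k) x" unfolding phi_def using pa(2) pb(2) by simp
    qed
    have dphi: "dnorm UNIV phi = norm (FT k)"
    proof (rule antisym)
      show "dnorm UNIV phi \<le> norm (FT k)" using dnorm_le[OF cK B0 bd] B1 n1 by simp
      show "norm (FT k) \<le> dnorm UNIV phi"
        by (rule dnorm_lower[OF phi_c cK T_cfun T_norm]) (use phiT in auto)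
    qed
    have delT: "\<forall>x. delta k (T x) = blinfun_apply (FT k) x" using T_cfun by (simp add: delta_def)
    have ddel: "dnorm UNIV (delta k) = norm (FT k)"
    proof (rule antisym)
      show "dnorm UNIV (delta k) \<le> norm (FT k)" using delta_dnorm n1 by simp
      show "norm (FT k) \<le> dnorm UNIV (delta k)"
        by (rule dnorm_lower[OF delta_cdual cK T_cfun T_norm]) (use delT in auto)
    qed
    obtain q where q: "\<And>y. y \<in> cdual UNIV \<and> (\<forall>x. y (T x) = blinfun_apply (FT k) x) \<and> dnorm UNIV y = norm (FT k) \<Longrightarrow> y = q"
      using T_ext[of "FT k"] by blast
    have "phi = delta k" using q[of phi] q[of "delta k"] phi_c phiT dphi delta_cdual delT ddel by auto
    then have comb: "\<And>f. f \<in> cfun UNIV \<Longrightarrow> (1-u) * pa f + u * pb f = f k"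
      unfolding phi_def by (metis delta_def)
    have comb2: "\<And>f. f \<in> cfun UNIV \<Longrightarrow> (1-(1-u)) * pb f + (1-u) * pa f = f k"
      using comb by (simp add: algebra_simps)
    have "a = FT k"
    proof (rule blinfun_eqI)
      fix x
      have "pa (T x) = T x k" by (rule extreme_helper[OF pa(1) na pb(1) nb u comb T_cfun])
      then show "blinfun_apply a x = blinfun_apply (FT k) x" using pa(2) by simp
    qed
    moreover have "b = FT k"
    proof (rule blinfun_eqI)
      fix x
      have "pb (T x) = T x k" by (rule extreme_helper[OF pb(1) nb pa(1) na _ _ comb2 T_cfun]) (use u in auto)
      then show "blinfun_apply b x = blinfun_apply (FT k) x" using pb(2) by simp
    qed
    ultimately show False using ab by simp
  qed
qed

definition Aset :: "'k set" where
  "Aset = {k. \<exists>F :: 'a \<Rightarrow>\<^sub>L real. (\<forall>x. blinfun_apply F x = T x k) \<and> F extreme_point_of (cball 0 1)}"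

lemma norm1_A0: "norm (FT k) = 1 \<Longrightarrow> k \<in> Aset"
  unfolding Aset_def using stepA by force

lemma notS_lt1: "k \<notin> closure Aset \<Longrightarrow> norm (FT k) < 1"
  using norm1_A0 FT_norm_le closure_subset by (metis less_eq_real_def subsetD)

lemma attain: "\<exists>k. \<bar>T x k\<bar> = norm x"
  using supn_attained[OF cK _ T_cont, of x] T_norm by auto

lemma attain_A0:
  assumes "x \<noteq> 0" "\<bar>T x k\<bar> = norm x"
  shows "k \<in> Aset"
proof -
  have "norm x \<le> norm (FT k) * norm x" using abs_T_le_FT[of x k] assms(2) by simp
  then have "1 \<le> norm (FT k)" using assms(1) by simp
  then show ?thesis using FT_norm_le[of k] norm1_A0 by simp
qed


context
  fixes phi :: "('k \<Rightarrow> real) \<Rightarrow> real" and xs :: "'a \<Rightarrow>\<^sub>L real"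
  assumes ph: "phi \<in> cdual UNIV" "\<And>x. phi (T x) = blinfun_apply xs x" "dnorm UNIV phi = norm xs"
begin

definition nu :: "('k \<Rightarrow> real) \<Rightarrow> real" where
  "nu f = Sup {\<bar>phi h\<bar> | h. h \<in> cfun UNIV \<and> (\<forall>t. \<bar>h t\<bar> \<le> f t)}"

lemma n_nonneg: "0 \<le> norm xs" by simp

lemma phi_bound: "h \<in> cfun UNIV \<Longrightarrow> \<bar>phi h\<bar> \<le> norm xs * supn UNIV h"
  using cd_bound[OF ph(1) cK] ph(3) by simp

lemma phi_bound2: "h \<in> cfun UNIV \<Longrightarrow> 0 \<le> B \<Longrightarrow> (\<And>t. \<bar>h t\<bar> \<le> B) \<Longrightarrow> \<bar>phi h\<bar> \<le> norm xs * B"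
proof -
  assume a: "h \<in> cfun UNIV" "0 \<le> B" "\<And>t. \<bar>h t\<bar> \<le> B"
  have "supn UNIV h \<le> B" using a by (intro supn_le) auto
  then have "norm xs * supn UNIV h \<le> norm xs * B" by (intro mult_left_mono) auto
  then show ?thesis using phi_bound[OF a(1)] by simp
qed

lemma nu_bdd:
  assumes "0 \<le> B" "\<And>t. f t \<le> B"
  shows "bdd_above {\<bar>phi h\<bar> | h. h \<in> cfun UNIV \<and> (\<forall>t. \<bar>h t\<bar> \<le> f t)}"
proof (rule bdd_aboveI)
  fix y assume "y \<in> {\<bar>phi h\<bar> | h. h \<in> cfun UNIV \<and> (\<forall>t. \<bar>h t\<bar> \<le> f t)}"
  then obtain h where h: "h \<in> cfun UNIV" "\<And>t. \<bar>h t\<bar> \<le> f t" "y = \<bar>phi h\<bar>" by auto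
  show "y \<le> norm xs * B" using phi_bound2[OF h(1) assms(1)] h(2,3) assms(2) order_trans by metis
qed

lemma nu_ne: "(\<And>t. 0 \<le> f t) \<Longrightarrow> {\<bar>phi h\<bar> | h. h \<in> cfun UNIV \<and> (\<forall>t. \<bar>h t\<bar> \<le> f t)} \<noteq> {}"
  using cfun_zero by fastforce

lemma nu_upper:
  assumes "0 \<le> B" "\<And>t. f t \<le> B" "h \<in> cfun UNIV" "\<And>t. \<bar>h t\<bar> \<le> f t"
  shows "\<bar>phi h\<bar> \<le> nu f"
  unfolding nu_def by (rule cSup_upper[OF _ nu_bdd[OF assms(1,2)]]) (use assms(3,4) in auto)

lemma nu_nonneg:
  assumes "0 \<le> B" "\<And>t. f t \<le> B" "\<And>t. 0 \<le> f t"
  shows "0 \<le> nu f"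
  using nu_upper[OF assms(1,2) cfun_zero] assms(3) cd_zero[OF ph(1)] by simp

lemma nu_le:
  assumes "\<And>t. 0 \<le> f t" "\<And>h. h \<in> cfun UNIV \<Longrightarrow> (\<And>t. \<bar>h t\<bar> \<le> f t) \<Longrightarrow> \<bar>phi h\<bar> \<le> c"
  shows "nu f \<le> c"
  unfolding nu_def by (rule cSup_least[OF nu_ne[OF assms(1)]]) (use assms(2) in auto)

lemma nu_approx:
  assumes "0 \<le> B" "\<And>t. f t \<le> B" "\<And>t. 0 \<le> f t" "0 < g"
  obtains h where "h \<in> cfun UNIV" "\<And>t. \<bar>h t\<bar> \<le> f t" "phi h > nu f - g"
proof -
  define s where "s = nu f - g"
  have "s < nu f" using assms(4) by (simp add: s_def)
  then have "s < Sup {\<bar>phi h\<bar> | h. h \<in> cfun UNIV \<and> (\<forall>t. \<bar>h t\<bar> \<le> f t)}" by (simp only: nu_def)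
  then have "\<exists>y\<in>{\<bar>phi h\<bar> | h. h \<in> cfun UNIV \<and> (\<forall>t. \<bar>h t\<bar> \<le> f t)}. s < y"
    by (simp only: less_cSup_iff[OF nu_ne[OF assms(3)] nu_bdd[OF assms(1,2)]])
  then obtain h where h: "h \<in> cfun UNIV" "\<And>t. \<bar>h t\<bar> \<le> f t" "s < \<bar>phi h\<bar>" by auto
  note h = h(1,2) h(3)[unfolded s_def]
  show ?thesis
  proof (cases "0 \<le> phi h")
    case True then show ?thesis using that h by auto
  next
    case False
    have m: "(\<lambda>t. (-1) * h t) \<in> cfun UNIV" by (rule cfun_scale[OF h(1)])
    have "phi (\<lambda>t. (-1) * h t) = (-1) * phi h" by (rule cd_scale[OF ph(1) h(1)])
    then show ?thesis using that[OF m] h False by auto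
  qed
qed

lemma nu_scale:
  assumes "0 \<le> c" "0 \<le> B" "\<And>t. f t \<le> B" "\<And>t. 0 \<le> f t"
  shows "nu (\<lambda>t. c * f t) \<le> c * nu f"
proof (rule nu_le)
  show "\<And>t. 0 \<le> c * f t" using assms by simp
  fix h assume h: "h \<in> cfun UNIV" "\<And>t. \<bar>h t\<bar> \<le> c * f t"
  show "\<bar>phi h\<bar> \<le> c * nu f"
  proof (cases "c = 0")
    case True
    then have "h = (\<lambda>t. 0)" using h(2) by (intro ext) (metis abs_le_zero_iff mult_zero_left)
    then show ?thesis using cd_zero[OF ph(1)] True by simp
  next
    case False
    then have cp: "0 < c" using assms(1) by simp
    define h' where "h' = (\<lambda>t. (1/c) * h t)"
    have h'c: "h' \<in> cfun UNIV" unfolding h'_def by (rule cfun_scale[OF h(1)])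
    have "\<bar>h' t\<bar> \<le> f t" for t
      using h(2)[of t] cp by (simp add: h'_def abs_mult divide_le_eq mult.commute)
    then have "\<bar>phi h'\<bar> \<le> nu f" by (intro nu_upper[OF assms(2,3) h'c])
    moreover have "phi h' = (1/c) * phi h" unfolding h'_def by (rule cd_scale[OF ph(1) h(1)])
    ultimately have "(1/c) * \<bar>phi h\<bar> \<le> nu f" using cp by (simp add: abs_mult)
    then have "c * ((1/c) * \<bar>phi h\<bar>) \<le> c * nu f" using cp by (intro mult_left_mono) auto
    then show ?thesis using cp by simp
  qed
qed

lemma nu_sum:
  assumes "finite I" "0 \<le> B"
    and F: "\<And>m t. m \<in> I \<Longrightarrow> 0 \<le> F m t \<and> F m t \<le> B" "\<And>m. m \<in> I \<Longrightarrow> continuous_on UNIV (F m)"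
  shows "h \<in> cfun UNIV \<Longrightarrow> (\<And>t. \<bar>h t\<bar> \<le> (\<Sum>m\<in>I. F m t)) \<Longrightarrow> \<bar>phi h\<bar> \<le> (\<Sum>m\<in>I. nu (F m))"
  using assms(1) F
proof (induction I arbitrary: h rule: finite_induct)
  case empty
  then have "h = (\<lambda>t. 0)" by (intro ext) simp
  then show ?case using cd_zero[OF ph(1)] by simp
next
  case (insert j I)
  define h1 where "h1 = (\<lambda>t. max (- F j t) (min (F j t) (h t)))"
  define h2 where "h2 = (\<lambda>t. h t - h1 t)"
  have hc: "continuous_on UNIV h" using insert.prems(1) by (simp add: cfun_UNIV)
  have h1c: "h1 \<in> cfun UNIV" unfolding h1_def cfun_UNIV using hc insert.prems(4)[of j]
    by (auto intro!: continuous_intros)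
  have h2c: "h2 \<in> cfun UNIV" unfolding h2_def by (intro cfun_diff insert.prems(1) h1c)
  have Sn: "0 \<le> (\<Sum>m\<in>I. F m t)" for t using insert.prems(3) by (intro sum_nonneg) auto
  have Fj: "0 \<le> F j t" for t using insert.prems(3)[of j t] by simp
  have b1: "\<bar>h1 t\<bar> \<le> F j t" for t using Fj[of t] unfolding h1_def by (auto simp: max_def min_def)
  have b2: "\<bar>h2 t\<bar> \<le> (\<Sum>m\<in>I. F m t)" for t
  proof -
    have "\<bar>h t\<bar> \<le> F j t + (\<Sum>m\<in>I. F m t)" using insert.prems(2)[of t] insert.hyps by simp
    then show ?thesis using Sn[of t] Fj[of t] unfolding h2_def h1_def by (auto simp: max_def min_def abs_if)
  qed
  have "\<bar>phi h1\<bar> \<le> nu (F j)"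
    by (rule nu_upper[OF assms(2) _ h1c b1]) (use insert.prems(3) in auto)
  moreover have "\<bar>phi h2\<bar> \<le> (\<Sum>m\<in>I. nu (F m))"
    by (rule insert.IH[OF h2c b2]) (use insert.prems in auto)
  moreover have "phi h = phi h1 + phi h2"
  proof -
    have "h = (\<lambda>t. h1 t + h2 t)" by (simp add: h2_def)
    then show ?thesis using cd_add[OF ph(1) h1c h2c] by simp
  qed
  ultimately show ?case using insert.hyps by simp
qed

lemma small_nbhd:
  assumes r: "0 < r" "r \<le> 1" and e: "0 < e"
  shows "\<exists>f. continuous_on UNIV f \<and> (\<forall>t. 0 \<le> f t \<and> f t \<le> 1) \<and> (\<forall>t. norm (FT t) \<le> 1 - r \<longrightarrow> f t = 1) \<and> nu f \<le> e"
proof (rule ccontr)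
  assume H: "\<not> ?thesis"
  define g where "g = e * r / 4"
  have g0: "0 < g" unfolding g_def using r e by simp
  obtain x0 where x0: "norm x0 \<le> 1" "blinfun_apply xs x0 > norm xs - g"
    using blinfun_near[OF g0, of xs] by blast
  define c where "c = 1 - r/2"
  have c0: "0 < c" unfolding c_def using r by simp
  define Y where "Y = {t. c \<le> \<bar>T x0 t\<bar>}"
  define Z where "Z = {t. norm (FT t) \<le> 1 - r}"
  have cY: "closed Y" unfolding Y_def by (intro closed_Collect_le continuous_intros T_cont)
  have cZ: "closed Z" unfolding Z_def by (rule closed_FT_le)
  have dZY: "Z \<inter> Y = {}"
  proof -
    have "\<bar>T x0 t\<bar> < c" if "t \<in> Z" for t
    proof -
      have "\<bar>T x0 t\<bar> \<le> norm (FT t) * norm x0" by (rule abs_T_le_FT)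
      also have "\<dots> \<le> norm (FT t) * 1" using x0(1) by (intro mult_left_mono) auto
      finally show ?thesis using that r unfolding Z_def c_def by simp
    qed
    then show ?thesis unfolding Y_def by (auto simp: not_le[symmetric])
  qed
  obtain f :: "'k \<Rightarrow> real" where f: "continuous_on UNIV f" "\<And>t. 0 \<le> f t \<and> f t \<le> 1"
    "\<And>t. t \<in> Z \<Longrightarrow> f t = 1" "\<And>t. t \<in> Y \<Longrightarrow> f t = 0"
    using urysohn_K[OF cK cZ cY dZY] by blast
  have nuf: "nu f > e"
  proof (rule ccontr)
    assume "\<not> nu f > e"
    then have "continuous_on UNIV f \<and> (\<forall>t. 0 \<le> f t \<and> f t \<le> 1) \<and> (\<forall>t. norm (FT t) \<le> 1 - r \<longrightarrow> f t = 1) \<and> nu f \<le> e"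
      using f(1,2,3) unfolding Z_def by auto
    then show False using H by blast
  qed
  have fB: "\<And>t. f t \<le> 1" "\<And>t. 0 \<le> f t" using f(2) by auto
  obtain k1 where k1: "k1 \<in> cfun UNIV" "\<And>t. \<bar>k1 t\<bar> \<le> f t" "phi k1 > nu f - g"
    using nu_approx[of 1 f g, OF _ fB(1) fB(2) g0] by auto
  have fc: "(\<lambda>t. f t * T x0 t) \<in> cfun UNIV" using f(1) T_cont by (auto simp: cfun_UNIV intro!: continuous_intros)
  have Tc: "T x0 \<in> cfun UNIV" by (rule T_cfun)
  define HH where "HH = (\<lambda>t. k1 t + (T x0 t - f t * T x0 t))"
  have HHc: "HH \<in> cfun UNIV" unfolding HH_def by (intro cfun_add cfun_diff k1(1) Tc fc)
  have "\<bar>HH t\<bar> \<le> 1" for t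
  proof -
    have "\<bar>HH t\<bar> \<le> \<bar>k1 t\<bar> + \<bar>(1 - f t) * T x0 t\<bar>" unfolding HH_def by (simp add: algebra_simps abs_triangle_ineq)
    also have "\<dots> \<le> f t + (1 - f t) * 1"
    proof -
      have "\<bar>T x0 t\<bar> \<le> 1" using T_bound[of x0 t] x0(1) by simp
      then have "(1 - f t) * \<bar>T x0 t\<bar> \<le> (1 - f t) * 1" using f(2)[of t] by (intro mult_left_mono) auto
      then show ?thesis using k1(2)[of t] f(2)[of t] by (simp add: abs_mult)
    qed
    finally show ?thesis by simp
  qed
  then have pHH: "\<bar>phi HH\<bar> \<le> norm xs" using phi_bound2[OF HHc, of 1] by simp
  have eHH: "phi HH = phi k1 + (blinfun_apply xs x0 - phi (\<lambda>t. f t * T x0 t))"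
    unfolding HH_def using cd_add[OF ph(1) k1(1) cfun_diff[OF Tc fc]] cd_diff[OF ph(1) Tc fc] ph(2) by simp
  define w where "w = (\<lambda>t. (1/c) * (f t * T x0 t))"
  have wc: "w \<in> cfun UNIV" unfolding w_def by (rule cfun_scale[OF fc])
  have wb: "\<bar>w t\<bar> \<le> f t" for t
  proof (cases "f t = 0")
    case True then show ?thesis by (simp add: w_def)
  next
    case False
    then have "t \<notin> Y" using f(4) by auto
    then have "\<bar>T x0 t\<bar> < c" unfolding Y_def by simp
    then have "f t * \<bar>T x0 t\<bar> \<le> f t * c" using f(2)[of t] by (intro mult_left_mono) auto
    then show ?thesis using c0 f(2)[of t] by (simp add: w_def abs_mult divide_le_eq mult.commute)
  qed
  have "\<bar>phi w\<bar> \<le> nu f" by (rule nu_upper[of 1 f, OF _ fB(1) wc wb]) simp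
  moreover have "phi w = (1/c) * phi (\<lambda>t. f t * T x0 t)" unfolding w_def by (rule cd_scale[OF ph(1) fc])
  ultimately have "(1/c) * \<bar>phi (\<lambda>t. f t * T x0 t)\<bar> \<le> nu f" using c0 by (simp add: abs_mult)
  then have "c * ((1/c) * \<bar>phi (\<lambda>t. f t * T x0 t)\<bar>) \<le> c * nu f" using c0 by (intro mult_left_mono) auto
  then have pf: "phi (\<lambda>t. f t * T x0 t) \<le> c * nu f" using c0 by simp
  have "phi HH > nu f - g + (norm xs - g) - c * nu f" using eHH pf k1(3) x0(2) by simp
  moreover have "nu f - c * nu f = (r/2) * nu f" unfolding c_def by (simp add: algebra_simps)
  moreover have "(r/2) * nu f > (r/2) * e" using nuf r by simp
  moreover have "(r/2) * e = 2 * g" unfolding g_def by simp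
  ultimately have "phi HH > norm xs" by linarith
  then show False using pHH by simp
qed


lemma geo_le: "(\<Sum>m<N. (1/2::real)^m) \<le> 2"
proof -
  have "(\<Sum>m<N. (1/2::real)^m) = 2 - 2 * (1/2)^N" by (induction N) (auto simp: power_one_over)
  then show ?thesis by simp
qed

lemma geo_le_fin: "finite (I::nat set) \<Longrightarrow> (\<Sum>m\<in>I. (1/2::real)^m) \<le> 2"
proof -
  assume fI: "finite I"
  have "I \<subseteq> {..<Suc (Max I)}" using fI by (auto simp: less_Suc_eq_le)
  then have "(\<Sum>m\<in>I. (1/2::real)^m) \<le> (\<Sum>m<Suc (Max I). (1/2::real)^m)"
    by (intro sum_mono2) auto
  then show ?thesis using geo_le[of "Suc (Max I)"] by linarith
qed

lemma support:
  assumes g: "g \<in> cfun UNIV" "\<And>t. t \<in> closure Aset \<Longrightarrow> g t = 0"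
  shows "phi g = 0"
proof -
  define M where "M = supn UNIV g"
  have gc: "continuous_on UNIV g" using g(1) by (simp add: cfun_UNIV)
  have M0: "0 \<le> M" unfolding M_def by (rule supn_nonneg[OF cK gc])
  have gM: "\<bar>g t\<bar> \<le> M" for t unfolding M_def by (rule abs_le_supn[OF cK gc]) simp
  have key: "\<bar>phi g\<bar> \<le> (4*M + norm xs) * e" if e: "0 < e" for e
  proof -
    have "\<forall>m::nat. \<exists>f. continuous_on UNIV f \<and> (\<forall>t. 0 \<le> f t \<and> f t \<le> 1) \<and>
            (\<forall>t. norm (FT t) \<le> 1 - 1/Suc m \<longrightarrow> f t = 1) \<and> nu f \<le> e / 2^m"
    proof
      fix m :: nat
      show "\<exists>f. continuous_on UNIV f \<and> (\<forall>t. 0 \<le> f t \<and> f t \<le> 1) \<and>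
            (\<forall>t. norm (FT t) \<le> 1 - 1/Suc m \<longrightarrow> f t = 1) \<and> nu f \<le> e / 2^m"
        by (rule small_nbhd) (use e in auto)
    qed
    then obtain F where F: "\<And>m. continuous_on UNIV (F m)" "\<And>m t. 0 \<le> F m t \<and> F m t \<le> 1"
      "\<And>m t. norm (FT t) \<le> 1 - 1/Suc m \<Longrightarrow> F m t = 1" "\<And>m. nu (F m) \<le> e / 2^m"
      by metis
    define Q where "Q = {t. e \<le> \<bar>g t\<bar>}"
    have "closed Q" unfolding Q_def by (intro closed_Collect_le continuous_intros gc)
    then have cQ: "compact Q" using compact_Int_closed[OF cK, of Q] by simp
    have cover: "Q \<subseteq> (\<Union>m\<in>UNIV. {t. 1/2 < F m t})"
    proof
      fix t assume "t \<in> Q"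
      then have "g t \<noteq> 0" using e by (auto simp: Q_def)
      then have "t \<notin> closure Aset" using g(2) by auto
      then have "norm (FT t) < 1" by (rule notS_lt1)
      then obtain m where "inverse (real (Suc m)) < 1 - norm (FT t)"
        using reals_Archimedean[of "1 - norm (FT t)"] by auto
      then have "norm (FT t) \<le> 1 - 1/Suc m" by (simp add: inverse_eq_divide)
      then have "F m t = 1" by (rule F(3))
      then have "1/2 < F m t" by simp
      then show "t \<in> (\<Union>m\<in>UNIV. {t. 1/2 < F m t})" by blast
    qed
    have opn: "open {t. 1/2 < F m t}" for m by (intro open_Collect_less continuous_intros F(1))
    obtain I where I0: "I \<subseteq> UNIV" and I: "finite I" "Q \<subseteq> (\<Union>m\<in>I. {t. 1/2 < F m t})"
      by (rule compactE_image[OF cQ, of UNIV "\<lambda>m. {t. 1/2 < F m t}", OF opn cover])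
    define G where "G = (\<lambda>t. \<Sum>m\<in>I. (2*M) * F m t)"
    define k1 where "k1 = (\<lambda>t. max (- G t) (min (G t) (g t)))"
    define k2 where "k2 = (\<lambda>t. g t - k1 t)"
    have Gc: "continuous_on UNIV G" unfolding G_def by (intro continuous_intros F(1))
    have G0: "0 \<le> G t" for t unfolding G_def using M0 F(2) by (intro sum_nonneg) auto
    have k1c: "k1 \<in> cfun UNIV" unfolding k1_def cfun_UNIV using Gc gc by (auto intro!: continuous_intros)
    have k2c: "k2 \<in> cfun UNIV" unfolding k2_def by (intro cfun_diff g(1) k1c)
    have k2b: "\<bar>k2 t\<bar> \<le> e" for t
    proof (cases "t \<in> Q")
      case True
      then obtain m where m: "m \<in> I" "1/2 < F m t" using I(2) by auto
      have "(2*M) * F m t \<le> G t" unfolding G_def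
        by (rule member_le_sum[OF m(1)]) (use M0 F(2) I(1) in auto)
      moreover have "(2*M) * (1/2) \<le> (2*M) * F m t" using m(2) M0 by (intro mult_left_mono) auto
      ultimately have "M \<le> G t" by simp
      then have "k1 t = g t" using gM[of t] G0[of t] unfolding k1_def by (auto simp: max_def min_def abs_le_iff)
      then show ?thesis using e by (simp add: k2_def)
    next
      case False
      then have "\<bar>g t\<bar> < e" by (simp add: Q_def)
      moreover have "\<bar>k2 t\<bar> \<le> \<bar>g t\<bar>" using G0[of t] unfolding k2_def k1_def by (auto simp: max_def min_def abs_if)
      ultimately show ?thesis by simp
    qed
    have p2: "\<bar>phi k2\<bar> \<le> norm xs * e" by (rule phi_bound2[OF k2c]) (use e k2b in auto)
    have FB: "0 \<le> (2*M) * F m t \<and> (2*M) * F m t \<le> 2*M" for m t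
      using F(2)[of m t] M0 by (auto intro: mult_left_le)
    have p1: "\<bar>phi k1\<bar> \<le> (\<Sum>m\<in>I. nu (\<lambda>t. (2*M) * F m t))"
    proof (rule nu_sum[OF I(1), of "2*M" "\<lambda>m t. (2*M) * F m t"])
      show "0 \<le> 2*M" using M0 by simp
      show "\<And>m t. m \<in> I \<Longrightarrow> 0 \<le> (2*M) * F m t \<and> (2*M) * F m t \<le> 2*M" using FB by blast
      show "\<And>m. m \<in> I \<Longrightarrow> continuous_on UNIV (\<lambda>t. (2*M) * F m t)" by (intro continuous_intros F(1))
      show "k1 \<in> cfun UNIV" by (rule k1c)
      have k1b: "\<bar>k1 t\<bar> \<le> G t" for t using G0[of t] unfolding k1_def by (auto simp: max_def min_def)
      show "\<And>t. \<bar>k1 t\<bar> \<le> (\<Sum>m\<in>I. (2*M) * F m t)" by (rule k1b[unfolded G_def])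
    qed
    have "(\<Sum>m\<in>I. nu (\<lambda>t. (2*M) * F m t)) \<le> (\<Sum>m\<in>I. (2*M) * (e / 2^m))"
    proof (rule sum_mono)
      fix m assume "m \<in> I"
      have "nu (\<lambda>t. (2*M) * F m t) \<le> (2*M) * nu (F m)"
        by (rule nu_scale[of "2*M" 1]) (use M0 F(2) in auto)
      also have "\<dots> \<le> (2*M) * (e / 2^m)" using F(4)[of m] M0 by (intro mult_left_mono) auto
      finally show "nu (\<lambda>t. (2*M) * F m t) \<le> (2*M) * (e / 2^m)" .
    qed
    also have "\<dots> = (2*M*e) * (\<Sum>m\<in>I. (1/2)^m)"
      by (simp add: sum_distrib_left power_one_over)
    also have "\<dots> \<le> (2*M*e) * 2" using geo_le_fin[OF I(1)] M0 e by (intro mult_left_mono) auto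
    finally have p1': "\<bar>phi k1\<bar> \<le> 4*M*e" using p1 by simp
    have "phi g = phi k1 + phi k2"
    proof -
      have "g = (\<lambda>t. k1 t + k2 t)" by (simp add: k2_def)
      then show ?thesis using cd_add[OF ph(1) k1c k2c] by simp
    qed
    then have "\<bar>phi g\<bar> \<le> 4*M*e + norm xs * e" using p1' p2 by simp
    then show ?thesis by (simp add: algebra_simps)
  qed
  show ?thesis
  proof (rule ccontr)
    assume "phi g \<noteq> 0"
    define C where "C = 4*M + norm xs"
    have C0: "0 \<le> C" unfolding C_def using M0 by simp
    define e where "e = \<bar>phi g\<bar> / (2 * (C + 1))"
    have e0: "0 < e" unfolding e_def using \<open>phi g \<noteq> 0\<close> C0 by simp
    have "\<bar>phi g\<bar> \<le> C * e" using key[OF e0] unfolding C_def .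
    also have "C * e < (C + 1) * e" using e0 by simp
    also have "(C + 1) * e = \<bar>phi g\<bar> / 2"
    proof -
      have "C + 1 \<noteq> 0" using C0 by simp
      then show ?thesis unfolding e_def by (simp add: field_simps)
    qed
    finally show False using \<open>phi g \<noteq> 0\<close> by simp
  qed
qed


end

abbreviation S0 :: "'k set" where "S0 \<equiv> closure Aset"

definition TG :: "'a \<Rightarrow> 'k \<Rightarrow> real" where "TG x = (\<lambda>k. if k \<in> S0 then T x k else 0)"

lemma cS0: "compact S0"
  using compact_Int_closed[OF cK, of S0] by simp

lemma TG_cfun: "TG x \<in> cfun S0"
proof -
  have "continuous_on S0 (T x)" using T_cont continuous_on_subset by blast
  then have "continuous_on S0 (TG x)" unfolding TG_def by (rule continuous_on_cong[THEN iffD1, rotated 2]) auto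
  then show ?thesis by (auto simp: cfun_def TG_def)
qed

lemma TG_norm: "supn S0 (TG x) = norm x"
proof (cases "x = 0")
  case True
  then have "TG x = (\<lambda>k. 0)" by (auto simp: TG_def T_zero)
  moreover have "supn S0 (\<lambda>k::'k. 0) = 0"
    using supn_le[of 0 S0 "\<lambda>k. 0"] supn_nonneg[OF cS0, of "\<lambda>k. 0"] by simp
  ultimately show ?thesis using True by simp
next
  case False
  obtain k where k: "\<bar>T x k\<bar> = norm x" using attain by blast
  then have kS: "k \<in> S0" using attain_A0[OF False k] closure_subset by blast
  have "supn S0 (TG x) \<le> norm x" by (rule supn_le) (auto simp: TG_def T_bound)
  moreover have "\<bar>TG x k\<bar> \<le> supn S0 (TG x)" by (rule abs_le_supn[OF cS0 cfunD(1)[OF TG_cfun] kS])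
  ultimately show ?thesis using k kS by (simp add: TG_def)
qed

definition Rs :: "('k \<Rightarrow> real) \<Rightarrow> 'k \<Rightarrow> real" where "Rs f = (\<lambda>k. if k \<in> S0 then f k else 0)"

lemma Rs_cfun: "f \<in> cfun UNIV \<Longrightarrow> Rs f \<in> cfun S0"
proof -
  assume "f \<in> cfun UNIV"
  then have "continuous_on S0 f" using continuous_on_subset by (auto simp: cfun_UNIV)
  then have "continuous_on S0 (Rs f)" unfolding Rs_def by (rule continuous_on_cong[THEN iffD1, rotated 2]) auto
  then show ?thesis by (auto simp: cfun_def Rs_def)
qed

lemma Rs_T: "Rs (T x) = TG x" by (simp add: Rs_def TG_def)

lemma lift:
  assumes psi: "psi \<in> cdual S0" "\<And>x. psi (TG x) = blinfun_apply xs x" "dnorm S0 psi = norm xs"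
  defines "phi \<equiv> (\<lambda>f. if f \<in> cfun UNIV then psi (Rs f) else 0)"
  shows "phi \<in> cdual UNIV \<and> (\<forall>x. phi (T x) = blinfun_apply xs x) \<and> dnorm UNIV phi = norm xs"
proof -
  have bd: "\<bar>phi f\<bar> \<le> norm xs * supn UNIV f" if f: "f \<in> cfun UNIV" for f
  proof -
    have fc: "continuous_on UNIV f" using f by (simp add: cfun_UNIV)
    have "\<bar>psi (Rs f)\<bar> \<le> norm xs * supn S0 (Rs f)" using cd_bound[OF psi(1) cS0 Rs_cfun[OF f]] psi(3) by simp
    moreover have "supn S0 (Rs f) \<le> supn UNIV f"
      by (rule supn_le[OF supn_nonneg[OF cK fc]]) (auto simp: Rs_def intro: abs_le_supn[OF cK fc])
    ultimately have "\<bar>psi (Rs f)\<bar> \<le> norm xs * supn UNIV f"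
      by (meson mult_left_mono norm_ge_zero order_trans)
    then show ?thesis using f by (simp add: phi_def)
  qed
  have pc: "phi \<in> cdual UNIV"
    unfolding cdual_def
  proof (intro CollectI conjI ballI allI impI)
    fix f g :: "'k \<Rightarrow> real" assume f: "f \<in> cfun UNIV" and g: "g \<in> cfun UNIV"
    have "Rs (\<lambda>k. f k + g k) = (\<lambda>k. Rs f k + Rs g k)" by (auto simp: Rs_def)
    then show "phi (\<lambda>k. f k + g k) = phi f + phi g"
      using f g cd_add[OF psi(1) Rs_cfun[OF f] Rs_cfun[OF g]] cfun_add[OF f g] by (simp add: phi_def)
  next
    fix f :: "'k \<Rightarrow> real" and c :: real assume f: "f \<in> cfun UNIV"
    have "Rs (\<lambda>k. c * f k) = (\<lambda>k. c * Rs f k)" by (auto simp: Rs_def)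
    then show "phi (\<lambda>k. c * f k) = c * phi f"
      using f cd_scale[OF psi(1) Rs_cfun[OF f]] cfun_scale[OF f] by (simp add: phi_def)
  next
    show "\<exists>B. \<forall>f\<in>cfun UNIV. \<bar>phi f\<bar> \<le> B * supn UNIV f" using bd by blast
  next
    fix f :: "'k \<Rightarrow> real" assume "f \<notin> cfun UNIV"
    then show "phi f = 0" by (simp add: phi_def)
  qed
  have pT: "\<forall>x. phi (T x) = blinfun_apply xs x" using T_cfun psi(2) by (simp add: phi_def Rs_T)
  have "dnorm UNIV phi = norm xs"
  proof (rule antisym)
    show "dnorm UNIV phi \<le> norm xs" by (rule dnorm_le[OF cK norm_ge_zero bd])
    show "norm xs \<le> dnorm UNIV phi" by (rule dnorm_lower[OF pc cK T_cfun T_norm]) (use pT in auto)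
  qed
  then show ?thesis using pc pT by blast
qed

definition Ext :: "('k \<Rightarrow> real) \<Rightarrow> 'k \<Rightarrow> real" where
  "Ext f = (SOME g. continuous_on UNIV g \<and> (\<forall>t\<in>S0. g t = f t) \<and> (\<forall>t. \<bar>g t\<bar> \<le> supn S0 f))"

lemma Ext_prop:
  assumes f: "f \<in> cfun S0"
  shows "continuous_on UNIV (Ext f)" "\<And>t. t \<in> S0 \<Longrightarrow> Ext f t = f t" "\<And>t. \<bar>Ext f t\<bar> \<le> supn S0 f"
proof -
  have fc: "continuous_on S0 f" using cfunD(1)[OF f] .
  have b: "- supn S0 f \<le> f t \<and> f t \<le> supn S0 f" if "t \<in> S0" for t
  proof -
    have "\<bar>f t\<bar> \<le> supn S0 f" by (rule abs_le_supn[OF cS0 fc that])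
    then show ?thesis using abs_le_iff[of "f t" "supn S0 f"] by linarith
  qed
  have "- supn S0 f \<le> supn S0 f" using supn_nonneg[OF cS0 fc] by simp
  then obtain g where g: "continuous_on UNIV g" "\<And>t. t \<in> S0 \<Longrightarrow> g t = f t"
    "\<And>t. - supn S0 f \<le> g t \<and> g t \<le> supn S0 f"
    using tietze_K[OF cK closed_closure fc b] by blast
  have "\<exists>g. continuous_on UNIV g \<and> (\<forall>t\<in>S0. g t = f t) \<and> (\<forall>t. \<bar>g t\<bar> \<le> supn S0 f)"
  proof (intro exI[of _ g] conjI ballI allI)
    fix t
    show "\<bar>g t\<bar> \<le> supn S0 f" using g(3)[of t] abs_le_iff[of "g t" "supn S0 f"] by linarith
  qed (use g in auto)
  then have "continuous_on UNIV (Ext f) \<and> (\<forall>t\<in>S0. Ext f t = f t) \<and> (\<forall>t. \<bar>Ext f t\<bar> \<le> supn S0 f)"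
    unfolding Ext_def by (rule someI_ex)
  then show "continuous_on UNIV (Ext f)" "\<And>t. t \<in> S0 \<Longrightarrow> Ext f t = f t" "\<And>t. \<bar>Ext f t\<bar> \<le> supn S0 f"
    by auto
qed

lemma Ext_cfun: "f \<in> cfun S0 \<Longrightarrow> Ext f \<in> cfun UNIV"
  using Ext_prop(1) by (simp add: cfun_UNIV)

lemma Rs_Ext: "f \<in> cfun S0 \<Longrightarrow> Rs (Ext f) = f"
  using Ext_prop(2) cfunD(2) by (fastforce simp: Rs_def)

lemma phi_eqS:
  assumes ph: "phi \<in> cdual UNIV" "\<And>x. phi (T x) = blinfun_apply xs x" "dnorm UNIV phi = norm xs"
    and u: "u \<in> cfun UNIV" and v: "v \<in> cfun UNIV" and eq: "\<And>t. t \<in> S0 \<Longrightarrow> u t = v t"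
  shows "phi u = phi v"
proof -
  have "phi (\<lambda>t. u t - v t) = 0"
    by (rule support[OF ph cfun_diff[OF u v]]) (use eq in auto)
  then show ?thesis using cd_diff[OF ph(1) u v] by simp
qed

lemma main: "U_embedding S0 TG"
  unfolding U_embedding_def
proof (intro conjI allI)
  show "\<And>x. TG x \<in> cfun S0" by (rule TG_cfun)
  show "\<And>x y k. TG (x + y) k = TG x k + TG y k" by (simp add: TG_def T_add)
  show "\<And>c x k. TG (c *\<^sub>R x) k = c * TG x k" by (simp add: TG_def T_scale)
  show "\<And>x. supn S0 (TG x) = norm x" by (rule TG_norm)
  fix xs :: "'a \<Rightarrow>\<^sub>L real"
  obtain phi where ph: "phi \<in> cdual UNIV" "\<And>x. phi (T x) = blinfun_apply xs x" "dnorm UNIV phi = norm xs"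
    using T_ext[of xs] by blast
  define psi where "psi = (\<lambda>f. if f \<in> cfun S0 then phi (Ext f) else 0)"
  have bd: "\<bar>psi f\<bar> \<le> norm xs * supn S0 f" if f: "f \<in> cfun S0" for f
  proof -
    have "\<bar>phi (Ext f)\<bar> \<le> norm xs * supn UNIV (Ext f)" using cd_bound[OF ph(1) cK Ext_cfun[OF f]] ph(3) by simp
    moreover have "supn UNIV (Ext f) \<le> supn S0 f"
      by (rule supn_le[OF supn_nonneg[OF cS0 cfunD(1)[OF f]]]) (use Ext_prop(3)[OF f] in auto)
    ultimately have "\<bar>phi (Ext f)\<bar> \<le> norm xs * supn S0 f"
      by (meson mult_left_mono norm_ge_zero order_trans)
    then show ?thesis using f by (simp add: psi_def)
  qed
  have pc: "psi \<in> cdual S0"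
    unfolding cdual_def
  proof (intro CollectI conjI ballI allI impI)
    fix f g :: "'k \<Rightarrow> real" assume f: "f \<in> cfun S0" and g: "g \<in> cfun S0"
    have fg: "(\<lambda>k. f k + g k) \<in> cfun S0" by (rule cfun_add[OF f g])
    have "phi (Ext (\<lambda>k. f k + g k)) = phi (\<lambda>k. Ext f k + Ext g k)"
      by (rule phi_eqS[OF ph Ext_cfun[OF fg] cfun_add[OF Ext_cfun[OF f] Ext_cfun[OF g]]])
         (simp add: Ext_prop(2)[OF fg] Ext_prop(2)[OF f] Ext_prop(2)[OF g])
    then show "psi (\<lambda>k. f k + g k) = psi f + psi g"
      using f g fg cd_add[OF ph(1) Ext_cfun[OF f] Ext_cfun[OF g]] by (simp add: psi_def)
  next
    fix f :: "'k \<Rightarrow> real" and c :: real assume f: "f \<in> cfun S0"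
    have fc: "(\<lambda>k. c * f k) \<in> cfun S0" by (rule cfun_scale[OF f])
    have "phi (Ext (\<lambda>k. c * f k)) = phi (\<lambda>k. c * Ext f k)"
      by (rule phi_eqS[OF ph Ext_cfun[OF fc] cfun_scale[OF Ext_cfun[OF f]]])
         (simp add: Ext_prop(2)[OF fc] Ext_prop(2)[OF f])
    then show "psi (\<lambda>k. c * f k) = c * psi f"
      using f fc cd_scale[OF ph(1) Ext_cfun[OF f]] by (simp add: psi_def)
  next
    show "\<exists>B. \<forall>f\<in>cfun S0. \<bar>psi f\<bar> \<le> B * supn S0 f" using bd by blast
  next
    fix f :: "'k \<Rightarrow> real" assume "f \<notin> cfun S0"
    then show "psi f = 0" by (simp add: psi_def)
  qed
  have pT: "\<forall>x. psi (TG x) = blinfun_apply xs x"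
  proof
    fix x
    have "phi (Ext (TG x)) = phi (T x)"
    proof (rule phi_eqS[OF ph Ext_cfun[OF TG_cfun] T_cfun])
      fix t assume t: "t \<in> S0"
      have "Ext (TG x) t = TG x t" by (rule Ext_prop(2)[OF TG_cfun t])
      then show "Ext (TG x) t = T x t" using t by (simp add: TG_def)
    qed
    then show "psi (TG x) = blinfun_apply xs x" using TG_cfun ph(2) by (simp add: psi_def)
  qed
  have pn: "dnorm S0 psi = norm xs"
  proof (rule antisym)
    show "dnorm S0 psi \<le> norm xs" by (rule dnorm_le[OF cS0 norm_ge_zero bd])
    show "norm xs \<le> dnorm S0 psi" by (rule dnorm_lower[OF pc cS0 TG_cfun TG_norm]) (use pT in auto)
  qed
  show "\<exists>!psi. psi \<in> cdual S0 \<and> (\<forall>x. psi (TG x) = blinfun_apply xs x) \<and> dnorm S0 psi = norm xs"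
  proof (rule ex1I[of _ psi])
    show "psi \<in> cdual S0 \<and> (\<forall>x. psi (TG x) = blinfun_apply xs x) \<and> dnorm S0 psi = norm xs"
      using pc pT pn by blast
  next
    fix psi' assume H: "psi' \<in> cdual S0 \<and> (\<forall>x. psi' (TG x) = blinfun_apply xs x) \<and> dnorm S0 psi' = norm xs"
    obtain q where q: "\<And>y. y \<in> cdual UNIV \<and> (\<forall>x. y (T x) = blinfun_apply xs x) \<and> dnorm UNIV y = norm xs \<Longrightarrow> y = q"
      using T_ext[of xs] by blast
    have L1: "(\<lambda>f. if f \<in> cfun UNIV then psi' (Rs f) else 0) = q"
      by (rule q) (rule lift, use H in auto)
    have L2: "(\<lambda>f. if f \<in> cfun UNIV then psi (Rs f) else 0) = q"
      by (rule q) (rule lift, use pc pT pn in auto)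
    show "psi' = psi"
    proof
      fix f
      show "psi' f = psi f"
      proof (cases "f \<in> cfun S0")
        case True
        have "psi' (Rs (Ext f)) = psi (Rs (Ext f))"
          using fun_cong[OF L1, of "Ext f"] fun_cong[OF L2, of "Ext f"] Ext_cfun[OF True] by simp
        then show ?thesis using Rs_Ext[OF True] by simp
      next
        case False
        then show ?thesis using cd_out[OF pc] cd_out[of psi' S0] H by auto
      qed
    qed
  qed
qed


end

theorem proposition7p4:
  fixes T :: "'a::banach \<Rightarrow> 'k::t2_space \<Rightarrow> real"
  assumes "compact (UNIV :: 'k set)"
    and "U_embedding (UNIV :: 'k set) T"
  defines "A0 \<equiv> {k. \<exists>F :: 'a \<Rightarrow>\<^sub>L real. (\<forall>x. blinfun_apply F x = T x k) \<and> F extreme_point_of (cball 0 1)}"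
  shows "U_embedding (closure A0) (\<lambda>x k. if k \<in> closure A0 then T x k else 0)"
proof -
  interpret uemb T by (rule uemb.intro[OF assms(1,2)])
  have e1: "A0 = Aset" unfolding A0_def Aset_def by simp
  have e2: "TG = (\<lambda>x k. if k \<in> closure Aset then T x k else 0)" by (intro ext) (simp add: TG_def)
  show ?thesis using main unfolding e1 e2 .
qed

end
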